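(* Let $v\ge 2$ and let $(X,\mathcal{A})$ be a $(v,2,1)$-BIBD, i.e. $|X|=v$ and $\mathcal{A}$ is the set of all $2$-subsets of $X$. If $\phi:\mathcal{A}\to Y$ is a weak nesting of $(X,\mathcal{A})$ into a partial $(w,3,2)$-BIBD, where $X\subseteq Y$ and $|Y|=w$, then $w\ge (5v-1)/4$.
   Context: A $(v,k,\lambda)$-BIBD is a pair $(X,\mathcal{A})$ where $X$ is a set of $v$ points and $\mathcal{A}$ is a multiset of $k$-subsets of $X$ (blocks) such that every pair of distinct points lies in exactly $\lambda$ blocks. A partial $(w,k,\lambda)$-BIBD is defined in the same way on $w$ points, except that every pair of distinct points lies in at most $\lambda$ blocks. Given a $(v,k,\lambda)$-BIBD $(X,\mathcal{A})$ and a set $Y\supseteq X$ with $|Y|=w$, a map $\phi:\mathcal{A}\to Y$ is a weak nesting if $\phi(A)\notin A$ for every block $A$ and the multiset of augmented blocks $\{A\cup\{\phi(A)\}:A\in\mathcal{A}\}$ (one for each block of $\mathcal{A}$, with multiplicity) is a partial $(w,k+1,\lambda+1)$-BIBD on point set $Y$. *)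

theory Defs
  imports Complex_Main "HOL-Library.Multiset"
begin

definition bibd :: "'a set \<Rightarrow> nat \<Rightarrow> nat \<Rightarrow> nat \<Rightarrow> 'a set multiset \<Rightarrow> bool" where
  "bibd X v k lam \<A> \<longleftrightarrow>
     finite X \<and> card X = v \<and>
     (\<forall>B\<in>#\<A>. B \<subseteq> X \<and> card B = k) \<and>
     (\<forall>x\<in>X. \<forall>y\<in>X. x \<noteq> y \<longrightarrow> size (filter_mset (\<lambda>B. x \<in> B \<and> y \<in> B) \<A>) = lam)"

definition partial_bibd :: "'a set \<Rightarrow> nat \<Rightarrow> nat \<Rightarrow> nat \<Rightarrow> 'a set multiset \<Rightarrow> bool" where
  "partial_bibd Y w k lam \<A> \<longleftrightarrow>
     finite Y \<and> card Y = w \<and>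
     (\<forall>B\<in>#\<A>. B \<subseteq> Y \<and> card B = k) \<and>
     (\<forall>x\<in>Y. \<forall>y\<in>Y. x \<noteq> y \<longrightarrow> size (filter_mset (\<lambda>B. x \<in> B \<and> y \<in> B) \<A>) \<le> lam)"

definition weak_nesting ::
  "'a set \<Rightarrow> nat \<Rightarrow> nat \<Rightarrow> nat \<Rightarrow> 'a set multiset \<Rightarrow> 'a set \<Rightarrow> nat \<Rightarrow> ('a set \<Rightarrow> 'a) \<Rightarrow> bool" where
  "weak_nesting X v k lam \<A> Y w \<phi> \<longleftrightarrow>
     bibd X v k lam \<A> \<and> X \<subseteq> Y \<and>
     (\<forall>B\<in>#\<A>. \<phi> B \<in> Y \<and> \<phi> B \<notin> B) \<and>
     partial_bibd Y w (k + 1) (lam + 1) (image_mset (\<lambda>B. insert (\<phi> B) B) \<A>)"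

end

theory Submission
  imports Defs
begin

lemma cnt: "finite A \<Longrightarrow> card {x\<in>A. Q x} = (\<Sum>x\<in>A. if Q x then 1 else 0)"
  using sum.inter_filter[of A "\<lambda>_. 1::nat" Q] by simp

theorem lemma2p1:
  fixes X Y :: "'a set" and \<A> :: "'a set multiset" and \<phi> :: "'a set \<Rightarrow> 'a" and v w :: nat
  assumes "v \<ge> 2"
    and "bibd X v 2 1 \<A>"
    and "set_mset \<A> = {B. B \<subseteq> X \<and> card B = 2}"
    and "X \<subseteq> Y" and "finite Y" and "card Y = w"
    and "weak_nesting X v 2 1 \<A> Y w \<phi>"
  shows "real w \<ge> (5 * real v - 1) / 4"
proof -
  define P where "P = {B. B \<subseteq> X \<and> card B = 2}"
  define T where "T = (\<lambda>B. insert (\<phi> B) B)"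
  have finX: "finite X" using assms(4,5) finite_subset by blast
  have cX: "card X = v" using assms(2) unfolding bibd_def by blast
  have finP: "finite P" unfolding P_def using finX by simp
  have cP: "card P = v * (v - 1) div 2" unfolding P_def using n_subsets[OF finX, of 2] cX choose_two by simp
  have phi: "\<And>B. B \<in> P \<Longrightarrow> \<phi> B \<in> Y \<and> \<phi> B \<notin> B"
    using assms(7,3) unfolding weak_nesting_def P_def by auto
  have pb: "\<forall>x\<in>Y. \<forall>y\<in>Y. x \<noteq> y \<longrightarrow> size (filter_mset (\<lambda>B. x \<in> B \<and> y \<in> B) (image_mset T \<A>)) \<le> 2"
  proof -
    have "partial_bibd Y w (2+1) (1+1) (image_mset T \<A>)"
      using assms(7) unfolding weak_nesting_def T_def by blast
    then have "\<forall>x\<in>Y. \<forall>y\<in>Y. x \<noteq> y \<longrightarrow> size (filter_mset (\<lambda>B. x \<in> B \<and> y \<in> B) (image_mset T \<A>)) \<le> 1+1"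
      unfolding partial_bibd_def by blast
    then show ?thesis unfolding one_add_one .
  qed
  have cov: "card {B\<in>P. x \<in> T B \<and> y \<in> T B} \<le> 2" if "x \<in> Y" "y \<in> Y" "x \<noteq> y" for x y
  proof -
    have sub: "mset_set P \<subseteq># \<A>" using mset_set_set_mset_msubset[of \<A>] assms(3) P_def by simp
    have "card {B\<in>P. x \<in> T B \<and> y \<in> T B} = size (filter_mset (\<lambda>B. x \<in> B \<and> y \<in> B) (image_mset T (mset_set P)))"
      using finP by (simp add: filter_mset_image_mset)
    also have "\<dots> \<le> size (filter_mset (\<lambda>B. x \<in> B \<and> y \<in> B) (image_mset T \<A>))"
      by (intro size_mset_mono multiset_filter_mono image_mset_subseteq_mono sub)
    also have "\<dots> \<le> 2" using pb that by blast
    finally show ?thesis .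
  qed
  define M where "M = {B\<in>P. \<phi> B \<in> X}"
  have finM: "finite M" using finP M_def by simp
  have s1: "card P + 2 * card M \<le> 2 * card P"
  proof -
    have "card P + 2 * card M = (\<Sum>B\<in>P. if \<phi> B \<in> X then 3 else 1)"
    proof -
      have "(\<Sum>B\<in>P. if \<phi> B \<in> X then 3 else 1) = (\<Sum>B\<in>P. 1 + (if \<phi> B \<in> X then 2 else 0))"
        by (intro sum.cong) auto
      also have "\<dots> = card P + 2 * card M"
      proof -
        have "(\<Sum>B\<in>M. (2::nat)) = (\<Sum>B\<in>P. (if \<phi> B \<in> X then 2 else 0))"
          unfolding M_def by (rule sum.inter_filter[OF finP])
        then show ?thesis unfolding sum.distrib by simp
      qed
      finally show ?thesis by simp
    qed
    also have "\<dots> \<le> (\<Sum>B\<in>P. card {e\<in>P. e \<subseteq> T B})"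
    proof (intro sum_mono)
      fix B assume B: "B \<in> P"
      show "(if \<phi> B \<in> X then 3 else 1) \<le> card {e\<in>P. e \<subseteq> T B}"
      proof (cases "\<phi> B \<in> X")
        case True
        have TX: "T B \<subseteq> X" using B True unfolding P_def T_def by auto
        have fT: "finite (T B)" using TX finX finite_subset by blast
        have "card (T B) = 3" using B phi[OF B] unfolding T_def P_def
          by (simp add: card_insert_if finite_subset[OF _ finX])
        then have "card {e. e \<subseteq> T B \<and> card e = 2} = 3" using n_subsets[OF fT, of 2] by (simp add: choose_two)
        moreover have "{e. e \<subseteq> T B \<and> card e = 2} = {e\<in>P. e \<subseteq> T B}"
          using TX unfolding P_def by auto
        ultimately show ?thesis using True by simp
      next
        case False
        have "B \<in> {e\<in>P. e \<subseteq> T B}" using B unfolding T_def by auto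
        moreover have "finite {e\<in>P. e \<subseteq> T B}" using finP by simp
        ultimately have "card {e\<in>P. e \<subseteq> T B} \<ge> 1"
          by (metis One_nat_def Suc_leI card_gt_0_iff empty_iff)
        then show ?thesis using False by simp
      qed
    qed
    also have "\<dots> = (\<Sum>B\<in>P. \<Sum>e\<in>P. if e \<subseteq> T B then 1 else 0)"
      using finP by (simp add: cnt)
    also have "\<dots> = (\<Sum>e\<in>P. \<Sum>B\<in>P. if e \<subseteq> T B then 1 else 0)"
      by (rule sum.swap)
    also have "\<dots> = (\<Sum>e\<in>P. card {B\<in>P. e \<subseteq> T B})"
      using finP by (simp add: cnt)
    also have "\<dots> \<le> (\<Sum>e\<in>P. 2)"
    proof (intro sum_mono)
      fix e assume e: "e \<in> P"
      then obtain x y where xy: "e = {x, y}" "x \<noteq> y" unfolding P_def by (auto simp: card_2_iff)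
      have "x \<in> Y" "y \<in> Y" using e xy assms(4) unfolding P_def by auto
      then have "card {B\<in>P. x \<in> T B \<and> y \<in> T B} \<le> 2" using cov xy by blast
      moreover have "{B\<in>P. e \<subseteq> T B} = {B\<in>P. x \<in> T B \<and> y \<in> T B}" using xy by auto
      ultimately show "card {B\<in>P. e \<subseteq> T B} \<le> 2" by simp
    qed
    also have "\<dots> = 2 * card P" by simp
    finally show ?thesis .
  qed
  have s2: "card {B\<in>P. \<phi> B = z} \<le> v" if z: "z \<in> Y - X" for z
  proof -
    define N where "N = {B\<in>P. \<phi> B = z}"
    have finN: "finite N" using finP N_def by simp
    have "2 * card N = (\<Sum>B\<in>N. card B)" using N_def P_def by simp
    also have "\<dots> = (\<Sum>B\<in>N. \<Sum>a\<in>X. if a \<in> B then 1 else 0)"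
    proof (intro sum.cong refl)
      fix B assume "B \<in> N"
      then have "B \<subseteq> X" using N_def P_def by auto
      then have "{a\<in>X. a \<in> B} = B" by auto
      then show "card B = (\<Sum>a\<in>X. if a \<in> B then 1 else 0)"
        using cnt[OF finX, of "\<lambda>a. a \<in> B"] by simp
    qed
    also have "\<dots> = (\<Sum>a\<in>X. \<Sum>B\<in>N. if a \<in> B then 1 else 0)" by (rule sum.swap)
    also have "\<dots> = (\<Sum>a\<in>X. card {B\<in>N. a \<in> B})" using finN by (simp add: cnt)
    also have "\<dots> \<le> (\<Sum>a\<in>X. 2)"
    proof (intro sum_mono)
      fix a assume a: "a \<in> X"
      have "{B\<in>N. a \<in> B} \<subseteq> {B\<in>P. a \<in> T B \<and> z \<in> T B}" unfolding N_def T_def by auto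
      then have "card {B\<in>N. a \<in> B} \<le> card {B\<in>P. a \<in> T B \<and> z \<in> T B}"
        using finP by (intro card_mono) auto
      also have "\<dots> \<le> 2" using cov a z assms(4) by blast
      finally show "card {B\<in>N. a \<in> B} \<le> 2" .
    qed
    also have "\<dots> = 2 * v" using cX by simp
    finally show ?thesis unfolding N_def by simp
  qed
  have s3: "card P - card M \<le> (w - v) * v"
  proof -
    have "card P - card M = card {B\<in>P. \<phi> B \<notin> X}"
    proof -
      have "P = M \<union> {B\<in>P. \<phi> B \<notin> X}" "M \<inter> {B\<in>P. \<phi> B \<notin> X} = {}" unfolding M_def by auto
      then have "card P = card M + card {B\<in>P. \<phi> B \<notin> X}"
        using finP by (metis card_Un_disjoint finM finite_Un)
      then show ?thesis by simp
    qed
    also have "\<dots> = (\<Sum>z\<in>Y - X. card {B\<in>{B\<in>P. \<phi> B \<notin> X}. \<phi> B = z})"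
    proof -
      have "(\<Sum>z\<in>Y - X. (\<Sum>B\<in>{B\<in>{B\<in>P. \<phi> B \<notin> X}. \<phi> B = z}. (1::nat))) = (\<Sum>B\<in>{B\<in>P. \<phi> B \<notin> X}. 1)"
        by (rule sum.group) (use finP assms(5) phi in auto)
      then show ?thesis by simp
    qed
    also have "\<dots> \<le> (\<Sum>z\<in>Y - X. v)"
    proof (intro sum_mono)
      fix z assume z: "z \<in> Y - X"
      have "{B\<in>{B\<in>P. \<phi> B \<notin> X}. \<phi> B = z} = {B\<in>P. \<phi> B = z}" using z by auto
      then show "card {B\<in>{B\<in>P. \<phi> B \<notin> X}. \<phi> B = z} \<le> v" using s2[OF z] by simp
    qed
    also have "\<dots> = (w - v) * v" using assms(4,5,6) cX finX by (simp add: card_Diff_subset)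
    finally show ?thesis .
  qed
  have "card P \<le> 2 * ((w - v) * v)" using s1 s3 by linarith
  then have "v * (v - 1) div 2 \<le> 2 * ((w - v) * v)" using cP by simp
  moreover have "even (v * (v - 1))" using assms(1) by (cases v) auto
  ultimately have "v * (v - 1) \<le> 2 * (2 * ((w - v) * v))" by (metis dvd_mult_div_cancel mult_le_mono2)
  then have "(v - 1) * v \<le> (4 * (w - v)) * v" by (metis mult.commute mult.assoc mult_2 numeral_Bit0)
  then have h: "v - 1 \<le> 4 * (w - v)" using assms(1) by simp
  moreover have "w \<ge> v" using assms(4,5,6) cX card_mono by blast
  ultimately have "real v - 1 \<le> 4 * (real w - real v)"
    using assms(1) by (simp add: of_nat_diff flip: of_nat_diff)
  then show ?thesis by simp
qed

end
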